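(* Let $(m_{1},\ldots,m_{\mu})$ be a $\mu$-tuple of even integers. For any unoriented $\mu$-component welded link $L$, the welded link $L(m_{1},\ldots,m_{\mu})$ can be deformed into the $\mu$-component trivial link by unoriented $V^{2}$-moves (together with welded Reidemeister moves).
   Context: An unoriented virtual link diagram is the image of an immersion of finitely many circles in the plane with transverse double points, each a classical crossing (with over/under information) or a virtual crossing. Welded Reidemeister moves are R1–R3, the virtual moves VR1–VR4, and the OC move (a strand passing over two strands at classical crossings may slide across a virtual crossing of those two strands); an unoriented welded link is an equivalence class of unoriented diagrams under these moves. The trivial $\mu$-component link is represented by $\mu$ disjoint circles without crossings. Multiplexing: let $D=\bigcup_{i=1}^{\mu}D_i$ be an unoriented $\mu$-component diagram and $(m_1,\dots,m_\mu)\in\mathbb{Z}^\mu$. View a classical crossing whose over-strand belongs to $D_j$ locally as a $2$-braid generator $\sigma$. Its multiplexing associated with $m_j$ replaces $\sigma$ by the word $\sigma\tau\sigma\tau\cdots\tau\sigma$ with $m_j$ letters $\sigma$ and $m_j-1$ virtual crossings $\tau$ if $m_j>0$; by a single virtual crossing $\tau$ if $m_j=0$; and by $\sigma^{-1}\tau\sigma^{-1}\cdots\tau\sigma^{-1}$ with $|m_j|$ letters $\sigma^{-1}$ (the crossing with over/under switched) if $m_j<0$. $D(m_1,\dots,m_\mu)$ is obtained by doing this at every classical crossing of $D$; its welded class depends only on the welded class $L$ of $D$ and is denoted $L(m_1,\dots,m_\mu)$. The unoriented $V^{2}$-move: inside a disk with two arcs $a,b$, replace parallel arcs without crossings by the tangle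 $(\sigma\tau)^{2}$, where $\sigma$ is a classical crossing with $b$ over $a$ and $\tau$ a virtual crossing, or the reverse; orientations disregarded. *)

theory Defs
  imports Main "HOL-Library.Nat_Bijection"
begin

text \<open>
  Virtual link diagrams modulo planar isotopy and the virtual moves VR1--VR4 are
  encoded by Gauss diagrams (Goussarov--Polyak--Viro).  A Gauss diagram with mu
  components is a list of mu lists (one cyclic word per oriented component).
  Each entry is an endpoint (c, ov, s) of the chord labelled c: ov = True means
  the over-crossing passage (tail of the arrow), ov = False the under-crossing
  passage (head); s is the sign of the classical crossing.
\<close>

type_synonym endpt = "nat \<times> bool \<times> bool"
type_synonym gdiag = "endpt list list"

definition occ :: "gdiag \<Rightarrow> nat \<Rightarrow> endpt list" where
  "occ D c = filter (\<lambda>e. fst e = c) (concat D)"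

definition gauss_wf :: "gdiag \<Rightarrow> bool" where
  "gauss_wf D \<longleftrightarrow> (\<forall>c. occ D c = [] \<or>
      (length (occ D c) = 2 \<and> (\<exists>s. (c, True, s) \<in> set (occ D c) \<and> (c, False, s) \<in> set (occ D c))))"

definition trivial_diag :: "nat \<Rightarrow> gdiag" where
  "trivial_diag mu = replicate mu []"

datatype titem = Pt endpt | Hole nat

definition fill :: "(nat \<Rightarrow> endpt list) \<Rightarrow> titem list list \<Rightarrow> gdiag" where
  "fill F C = map (\<lambda>w. concat (map (\<lambda>x. case x of Pt e \<Rightarrow> [e] | Hole n \<Rightarrow> F n) w)) C"

definition template_ok :: "titem list list \<Rightarrow> nat \<Rightarrow> bool" where
  "template_ok C n \<longleftrightarrow>
     (\<forall>i<n. length (filter (\<lambda>x. x = Hole i) (concat C)) = 1) \<and>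
     (\<forall>i. Hole i \<in> set (concat C) \<longrightarrow> i < n)"

definition tlabels :: "titem list list \<Rightarrow> nat set" where
  "tlabels C = {c. \<exists>ov s. Pt (c, ov, s) \<in> set (concat C)}"

definition ord2 :: "bool \<Rightarrow> 'a \<Rightarrow> 'a \<Rightarrow> 'a list" where
  "ord2 b x y = (if b then [x, y] else [y, x])"

text \<open>R3: arcs T (hole 0), M (hole 1), B (hole 2), chords c1: T over M,
  c2: T over B, c3: M over B.  The move reverses the order of the two endpoints
  on each arc; the side condition singles out exactly the sign/order patterns
  realised by three lines in the plane.\<close>

definition r3_frag :: "nat \<Rightarrow> nat \<Rightarrow> nat \<Rightarrow> bool \<Rightarrow> bool \<Rightarrow> bool \<Rightarrow> bool \<Rightarrow> bool \<Rightarrow> bool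
    \<Rightarrow> nat \<Rightarrow> endpt list" where
  "r3_frag c1 c2 c3 s1 s2 s3 oT oM oB i =
     (if i = 0 then ord2 oT (c1, True, s1) (c2, True, s2)
      else if i = 1 then ord2 oM (c1, False, s1) (c3, True, s3)
      else ord2 oB (c2, False, s2) (c3, False, s3))"

inductive welded_step :: "gdiag \<Rightarrow> gdiag \<Rightarrow> bool" where
  rotate: "k < length D \<Longrightarrow> welded_step D (D[k := rotate1 (D ! k)])"
| rename: "inj f \<Longrightarrow> welded_step D (map (map (\<lambda>(c, ov, s). (f c, ov, s))) D)"
| R1: "template_ok C 1 \<Longrightarrow> c \<notin> tlabels C \<Longrightarrow>
     welded_step (fill (\<lambda>_. []) C) (fill (\<lambda>_. [(c, ov, s), (c, \<not> ov, s)]) C)"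
| R2: "template_ok C 2 \<Longrightarrow> c \<notin> tlabels C \<Longrightarrow> d \<notin> tlabels C \<Longrightarrow> c \<noteq> d \<Longrightarrow>
     welded_step (fill (\<lambda>_. []) C)
       (fill (\<lambda>i. if i = 0 then [(c, False, s), (d, False, \<not> s)]
                  else ord2 b (c, True, s) (d, True, \<not> s)) C)"
| R3: "template_ok C 3 \<Longrightarrow> c1 \<notin> tlabels C \<Longrightarrow> c2 \<notin> tlabels C \<Longrightarrow> c3 \<notin> tlabels C \<Longrightarrow>
     c1 \<noteq> c2 \<Longrightarrow> c1 \<noteq> c3 \<Longrightarrow> c2 \<noteq> c3 \<Longrightarrow>
     ((s1 \<noteq> s2) \<longleftrightarrow> (oM \<noteq> oB)) \<Longrightarrow> ((s2 \<noteq> s3) \<longleftrightarrow> (oT \<noteq> oM)) \<Longrightarrow>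
     welded_step (fill (r3_frag c1 c2 c3 s1 s2 s3 oT oM oB) C)
                 (fill (\<lambda>i. rev (r3_frag c1 c2 c3 s1 s2 s3 oT oM oB i)) C)"
| OC: "template_ok C 1 \<Longrightarrow>
     welded_step (fill (\<lambda>_. [(a, True, s), (b, True, t)]) C)
                 (fill (\<lambda>_. [(b, True, t), (a, True, s)]) C)"

definition reverse_comp :: "gdiag \<Rightarrow> nat \<Rightarrow> gdiag" where
  "reverse_comp D k =
     (let S = {c. length (filter (\<lambda>e. fst e = c) (D ! k)) = 1};
          D' = map (map (\<lambda>(c, ov, s). (c, ov, if c \<in> S then \<not> s else s))) D
      in D'[k := rev (D' ! k)])"

inductive unoriented_welded_step :: "gdiag \<Rightarrow> gdiag \<Rightarrow> bool" where
  welded: "welded_step D D' \<Longrightarrow> unoriented_welded_step D D'"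
| reverse: "k < length D \<Longrightarrow> unoriented_welded_step D (reverse_comp D k)"

text \<open>Unoriented V^2-move: two chords with the same sign, both from arc b (hole 1)
  to arc a (hole 0), heads adjacent on a and tails adjacent on b.\<close>
inductive v2_step :: "gdiag \<Rightarrow> gdiag \<Rightarrow> bool" where
  V2: "template_ok C 2 \<Longrightarrow> c \<notin> tlabels C \<Longrightarrow> d \<notin> tlabels C \<Longrightarrow> c \<noteq> d \<Longrightarrow>
     v2_step (fill (\<lambda>_. []) C)
       (fill (\<lambda>i. if i = 0 then [(c, False, s), (d, False, s)]
                  else ord2 b (c, True, s) (d, True, s)) C)"

definition tailcomp :: "gdiag \<Rightarrow> nat \<Rightarrow> nat" where
  "tailcomp D c = (LEAST j. j < length D \<and> (\<exists>s. (c, True, s) \<in> set (D ! j)))"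

definition mux_endpt :: "int \<Rightarrow> endpt \<Rightarrow> endpt list" where
  "mux_endpt k e = (case e of (c, ov, s) \<Rightarrow>
     (if k \<ge> 0 then map (\<lambda>i. (prod_encode (c, i), ov, s)) [0..<nat k]
      else map (\<lambda>i. (prod_encode (c, i), \<not> ov, \<not> s)) [0..<nat (- k)]))"

definition multiplex :: "(nat \<Rightarrow> int) \<Rightarrow> gdiag \<Rightarrow> gdiag" where
  "multiplex m D = map (\<lambda>w. concat (map (\<lambda>e. mux_endpt (m (tailcomp D (fst e))) e) w)) D"

end

theory Submission
  imports Defs
begin

definition muxk :: "(nat \<Rightarrow> int) \<Rightarrow> gdiag \<Rightarrow> gdiag" where
  "muxk k D = map (\<lambda>w. concat (map (\<lambda>e. mux_endpt (k (fst e)) e) w)) D"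

definition tmpl :: "(endpt \<Rightarrow> titem list) \<Rightarrow> gdiag \<Rightarrow> titem list list" where
  "tmpl g D = map (\<lambda>w. concat (map g w)) D"

lemma mux_endpt_alt:
  "mux_endpt k (c, ov, s) = map (\<lambda>i. (prod_encode (c, i), ov = (0 \<le> k), s = (0 \<le> k))) [0..<nat \<bar>k\<bar>]"
  by (auto simp: mux_endpt_def)

lemma fill_tmpl:
  "fill F (tmpl g D) = map (\<lambda>w. concat (map (\<lambda>e. concat (map (\<lambda>x. case x of Pt e \<Rightarrow> [e] | Hole n \<Rightarrow> F n) (g e))) w)) D"
  unfolding fill_def tmpl_def
proof (induction D)
  case (Cons w D)
  have "concat (map (case_titem (\<lambda>e. [e]) F) (concat (map g w))) =
        concat (map (\<lambda>e. concat (map (case_titem (\<lambda>e. [e]) F) (g e))) w)"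
    by (induction w) auto
  then show ?case using Cons by simp
qed simp

lemma fill_Pt: "concat (map (\<lambda>x. case x of Pt e \<Rightarrow> [e] | Hole n \<Rightarrow> F n) (map Pt xs)) = xs"
  by (induction xs) auto

lemma fill_Pt2: "concat (map ((\<lambda>x. case x of Pt e \<Rightarrow> [e] | Hole n \<Rightarrow> F n) \<circ> Pt) xs) = xs"
  by (induction xs) auto

lemma fill_if: "concat (map (\<lambda>x. case x of Pt e \<Rightarrow> [e] | Hole n \<Rightarrow> F n) (if P then [Hole i] else [])) = (if P then F i else [])"
  by simp

lemma concat_tmpl: "concat (tmpl g D) = concat (map g (concat D))"
  by (induction D) (auto simp: tmpl_def)

lemma occ_two:
  assumes "gauss_wf D" "c \<in> fst ` set (concat D)"
  obtains s where "occ D c = [(c,True,s),(c,False,s)] \<or> occ D c = [(c,False,s),(c,True,s)]"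
proof -
  have ne: "occ D c \<noteq> []" using assms(2) by (auto simp: occ_def filter_empty_conv)
  then obtain s where l: "length (occ D c) = 2" "(c,True,s) \<in> set (occ D c)" "(c,False,s) \<in> set (occ D c)"
    using assms(1) unfolding gauss_wf_def by blast
  then obtain x y where "occ D c = [x,y]"
    by (metis (no_types, lifting) length_0_conv length_Suc_conv numeral_2_eq_2)
  with l have "occ D c = [(c,True,s),(c,False,s)] \<or> occ D c = [(c,False,s),(c,True,s)]" by auto
  then show ?thesis using that by blast
qed

lemma v2_muxk:
  assumes wf: "gauss_wf D" and cL: "c \<in> fst ` set (concat D)" and n2: "2 \<le> nat \<bar>k c\<bar>"
  shows "v2_step (muxk (k(c := if 0 < k c then k c - 2 else k c + 2)) D) (muxk k D)"
proof -
  obtain s where os: "occ D c = [(c,True,s),(c,False,s)] \<or> occ D c = [(c,False,s),(c,True,s)]"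
    using occ_two[OF wf cL] by blast
  have eset: "e = (c,True,s) \<or> e = (c,False,s)" if "e \<in> set (concat D)" "fst e = c" for e
  proof -
    have "e \<in> set (occ D c)" using that by (auto simp: occ_def)
    then show ?thesis using os by auto
  qed
  define n where "n = nat \<bar>k c\<bar>"
  define k' where "k' = k(c := if 0 < k c then k c - 2 else k c + 2)"
  define h where "h e = (if fst (snd e) = (0 < k c) then 1 else (0::nat))" for e :: endpt
  define g where "g e = map Pt (mux_endpt (k' (fst e)) e) @ (if fst e = c then [Hole (h e)] else [])" for e
  define C where "C = tmpl g D"
  define sn where "sn = (s = (0 < k c))"
  define cn where "cn = prod_encode (c, n - 2)"
  define dn where "dn = prod_encode (c, n - 1)"
  define F where "F i = (if i = 0 then [(cn,False,sn),(dn,False,sn)] else ord2 True (cn,True,sn) (dn,True,sn))" for i :: nat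
  have kc0: "k c \<noteq> 0" using n2 by auto
  have nk': "nat \<bar>k' c\<bar> = n - 2" using n2 by (auto simp: k'_def n_def)
  have sg: "(0 \<le> k' c) = (0 \<le> k c)" if "n - 2 > 0" using that n2 by (auto simp: k'_def n_def)
  have 1: "fill (\<lambda>_. []) C = muxk k' D"
    unfolding C_def fill_tmpl muxk_def g_def by (auto simp: fill_Pt fill_Pt2 fill_if)
  have pe: "mux_endpt (k' (fst e)) e @ (if fst e = c then F (h e) else []) = mux_endpt (k (fst e)) e"
    if "e \<in> set (concat D)" for e
  proof (cases "fst e = c")
    case True
    then have e: "e = (c,True,s) \<or> e = (c,False,s)" using eset that by blast
    have split: "[0..<n] = [0..<n-2] @ [n-2, n-1]"
    proof -
      obtain m where "n = Suc (Suc m)" using n2 n_def by (metis add_2_eq_Suc le_Suc_ex)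
      then show ?thesis by simp
    qed
    have m1: "mux_endpt (k' c) (c, ov, s) = map (\<lambda>i. (prod_encode (c, i), ov = (0 \<le> k c), s = (0 \<le> k c))) [0..<n-2]" for ov
    proof (cases "n - 2 > 0")
      case True then show ?thesis using sg[OF True] nk' by (simp add: mux_endpt_alt)
    next
      case False then show ?thesis using nk' by (simp add: mux_endpt_alt)
    qed
    have m2: "mux_endpt (k c) (c, ov, s) = map (\<lambda>i. (prod_encode (c, i), ov = (0 \<le> k c), s = (0 \<le> k c))) [0..<n]" for ov
      by (simp add: mux_endpt_alt n_def)
    have kk: "(0 \<le> k c) = (0 < k c)" using kc0 by auto
    have "mux_endpt (k c) e = mux_endpt (k' c) e @ F (h e)"
      using e by (cases "0 < k c") (auto simp: m1 m2 split F_def h_def ord2_def cn_def dn_def sn_def kk)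
    then show ?thesis using True by simp
  next
    case False
    then show ?thesis by (simp add: k'_def)
  qed
  have 2: "fill F C = muxk k D"
    unfolding C_def fill_tmpl muxk_def g_def
    apply (simp add: fill_Pt fill_Pt2 fill_if)
    apply (intro ballI arg_cong[where f=concat] map_cong[OF refl])
    apply (rule pe)
    apply auto
    done
  have cnt: "length (filter (\<lambda>x. x = Hole i) (concat (map g xs))) = length (filter (\<lambda>e. fst e = c \<and> h e = i) xs)" for i xs
    by (induction xs) (auto simp: g_def filter_empty_conv)
  have "filter (\<lambda>e. fst e = c \<and> h e = i) (concat D) = filter (\<lambda>e. h e = i) (occ D c)" for i
    by (simp add: occ_def filter_filter conj_commute)
  then have 3: "template_ok C 2"
    unfolding template_ok_def C_def concat_tmpl using os
    by (auto simp: cnt h_def g_def less_2_cases_iff)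
  have 4: "cn \<notin> tlabels C" "dn \<notin> tlabels C"
    unfolding tlabels_def C_def concat_tmpl using nk'
    by (auto simp: g_def mux_endpt_alt cn_def dn_def split: if_splits)
  have 5: "cn \<noteq> dn" using n2 by (simp add: cn_def dn_def n_def)
  have "v2_step (fill (\<lambda>_. []) C) (fill F C)"
    unfolding F_def by (rule v2_step.V2[OF 3 4 5])
  then show ?thesis using 1 2 k'_def by simp
qed

lemma muxk_reduce:
  assumes wf: "gauss_wf D"
  shows "(\<forall>c \<in> fst ` set (concat D). even (k c)) \<Longrightarrow>
    equivclp (sup unoriented_welded_step v2_step) (muxk k D) (muxk (\<lambda>_. 0) D)"
proof (induction "\<Sum>c\<in>fst ` set (concat D). nat \<bar>k c\<bar>" arbitrary: k rule: less_induct)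
  case less
  let ?L = "fst ` set (concat D)"
  show ?case
  proof (cases "\<forall>c\<in>?L. k c = 0")
    case True
    have "muxk k D = muxk (\<lambda>_. 0) D"
      unfolding muxk_def
      apply (intro map_cong[OF refl] arg_cong[where f=concat])
      using True by auto
    then show ?thesis by simp
  next
    case False
    then obtain c where cL: "c \<in> ?L" and kc: "k c \<noteq> 0" by blast
    have "even (k c)" using less.prems cL by blast
    then have "2 \<le> \<bar>k c\<bar>" using kc by (auto elim!: evenE simp: abs_mult)
    then have n2: "2 \<le> nat \<bar>k c\<bar>" by simp
    define k' where "k' = k(c := if 0 < k c then k c - 2 else k c + 2)"
    have nk': "nat \<bar>k' c\<bar> = nat \<bar>k c\<bar> - 2" using n2 by (auto simp: k'_def)
    have fin: "finite ?L" by simp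
    have "(\<Sum>x\<in>?L. nat \<bar>k' x\<bar>) = nat \<bar>k' c\<bar> + (\<Sum>x\<in>?L - {c}. nat \<bar>k' x\<bar>)"
      using sum.remove[OF fin cL] by blast
    also have "(\<Sum>x\<in>?L - {c}. nat \<bar>k' x\<bar>) = (\<Sum>x\<in>?L - {c}. nat \<bar>k x\<bar>)"
      by (rule sum.cong) (auto simp: k'_def)
    also have "nat \<bar>k' c\<bar> + (\<Sum>x\<in>?L - {c}. nat \<bar>k x\<bar>) < nat \<bar>k c\<bar> + (\<Sum>x\<in>?L - {c}. nat \<bar>k x\<bar>)"
      using nk' n2 by simp
    also have "\<dots> = (\<Sum>x\<in>?L. nat \<bar>k x\<bar>)"
      using sum.remove[OF fin cL, of "\<lambda>x. nat \<bar>k x\<bar>"] by simp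
    finally have lt: "(\<Sum>x\<in>?L. nat \<bar>k' x\<bar>) < (\<Sum>x\<in>?L. nat \<bar>k x\<bar>)" .
    have ev': "\<forall>x\<in>?L. even (k' x)" using less.prems by (auto simp: k'_def)
    have IH: "equivclp (sup unoriented_welded_step v2_step) (muxk k' D) (muxk (\<lambda>_. 0) D)"
      using less.hyps[OF lt ev'] .
    have "v2_step (muxk k' D) (muxk k D)"
      unfolding k'_def by (rule v2_muxk[where k=k and c=c, OF wf cL n2])
    then have "equivclp (sup unoriented_welded_step v2_step) (muxk k D) (muxk k' D)"
      by (intro converse_r_into_equivclp) simp
    then show ?thesis using IH by (rule equivclp_trans)
  qed
qed

theorem proposition6p3:
  fixes mu :: nat and m :: "nat \<Rightarrow> int" and D :: gdiag
  assumes "\<forall>i<mu. even (m i)"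
    and "gauss_wf D"
    and "length D = mu"
  shows "equivclp (sup unoriented_welded_step v2_step) (multiplex m D) (trivial_diag mu)"
proof -
  have ev: "\<forall>c \<in> fst ` set (concat D). even (m (tailcomp D c))"
  proof
    fix c assume cL: "c \<in> fst ` set (concat D)"
    obtain s where os: "occ D c = [(c,True,s),(c,False,s)] \<or> occ D c = [(c,False,s),(c,True,s)]"
      using occ_two[OF assms(2) cL] by blast
    then have "(c,True,s) \<in> set (occ D c)" by auto
    then have "(c,True,s) \<in> set (concat D)" by (simp add: occ_def)
    then obtain w where w: "w \<in> set D" "(c,True,s) \<in> set w" by auto
    then obtain j where "j < length D" "D ! j = w" by (meson in_set_conv_nth)
    then have "j < length D" "(c,True,s) \<in> set (D ! j)" using w by auto
    then have "\<exists>j. j < length D \<and> (\<exists>s. (c, True, s) \<in> set (D ! j))" by blast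
    then have "tailcomp D c < length D"
      unfolding tailcomp_def by (rule LeastI2_ex) auto
    then show "even (m (tailcomp D c))" using assms(1,3) by simp
  qed
  have "multiplex m D = muxk (\<lambda>c. m (tailcomp D c)) D"
    by (simp add: multiplex_def muxk_def)
  moreover have "muxk (\<lambda>_. 0) D = trivial_diag mu"
    using assms(3) by (simp add: muxk_def trivial_diag_def mux_endpt_def map_replicate_const)
  ultimately show ?thesis
    using muxk_reduce[OF assms(2), of "\<lambda>c. m (tailcomp D c)"] ev by simp
qed

end
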